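(* Assume the following about $\phi^{\mathrm{AI}}(K;0)=h^{\mathrm{AI}}(K;0)/K$: it is continuous on $(0,\infty)$; $\phi^{\mathrm{AI}}(K;0)<\lambda$ for all sufficiently small $K>0$; there is $\hat K>0$ with $\phi^{\mathrm{AI}}(\hat K;0)>\lambda$; and $\phi^{\mathrm{AI}}(K;0)<\lambda$ for all sufficiently large $K$ (these hold under the hypotheses $C(0)>\beta\Delta+u$, existence of such $\hat K$, $\lim_{K\to\infty}w^{\mathrm{AI}}(\underline\alpha,K;\pi)=\infty$, and continuity of $\phi^{\mathrm{AI}}(\cdot;0)$). Let $K_U^{\mathrm{AI}}>0$ be the smallest positive $K$ with $\phi^{\mathrm{AI}}(K;0)=\lambda$ (the unstable threshold steady state). Suppose $a_H^{\mathrm{AI}}(K)$ is continuous on $(0,\infty)$, strictly positive for all $K>0$, and that $a_H^{\mathrm{AI}}(K)/K$ is bounded below by a positive constant for all sufficiently small $K>0$. Then: (i) for every $\eta>0$, $\phi^{\mathrm{AI}}(K;\eta)>\phi^{\mathrm{AI}}(K;0)$ for all $K>0$; (ii) the number $$\bar\eta=\sup_{K\in(0,K_U^{\mathrm{AI}}]}\frac{[\lambda-\phi^{\mathrm{AI}}(K;0)]_+}{\Delta(1-\pi)\,a_H^{\mathrm{AI}}(K)/K}$$ satisfies $\bar\eta>0$ and, for all $\eta>\bar\eta$, $\phi^{\mathrm{AI}}(K;\eta)>\lambda$ for all $K\in(0,K_U^{\mathrm{AI}}]$ (the low-archive basin is eliminated); in particular if $\bar\eta\le1$ this is achieved by some $\eta\in[0,1]$,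 while if $\bar\eta>1$ then even $\eta=1$ does not achieve it; (iii) $\bar\eta$ is weakly decreasing under pointwise increases of $a_H^{\mathrm{AI}}(K)/K$ on $(0,K_U^{\mathrm{AI}}]$.
   Context: Model: archive stock $K\ge0$ depreciating at rate $\lambda\in(0,1)$; routine-task share $\pi\in(0,1)$; knowledge increment $\Delta>0$; parameters $\beta,u\ge0$; cost shifter $C(K)$; outside option $w^{\mathrm{AI}}(\alpha,K;\pi)$ with lowest ability $\underline\alpha$. In the AI environment, for each $K$ the period equilibrium gives a posted flow of knowledge-enhancing queries $q_H^{\mathrm{AI}}(K)\ge0$, resolution probability $\sigma^{\mathrm{AI}}(K)\in[0,1]$, and private-resolution probability of knowledge-enhancing queries $a_H^{\mathrm{AI}}(K)\in[0,1]$. With conversion rate $\eta\in[0,1]$ (probability that a privately resolved knowledge-enhancing query is publicly logged), knowledge creation is $h^{\mathrm{AI}}(K;\eta)=\Delta(1-\pi)[q_H^{\mathrm{AI}}(K)\sigma^{\mathrm{AI}}(K)+\eta a_H^{\mathrm{AI}}(K)]$ and average creation is $\phi^{\mathrm{AI}}(K;\eta)=h^{\mathrm{AI}}(K;\eta)/K$, so $\phi^{\mathrm{AI}}(K;\eta)=\phi^{\mathrm{AI}}(K;0)+\Delta(1-\pi)\eta\,a_H^{\mathrm{AI}}(K)/K$. $[x]_+=\max\{x,0\}$. *)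

theory Defs
  imports "HOL-Analysis.Analysis"
begin

definition h_AI :: "real \<Rightarrow> real \<Rightarrow> (real \<Rightarrow> real) \<Rightarrow> (real \<Rightarrow> real) \<Rightarrow> (real \<Rightarrow> real)
                     \<Rightarrow> real \<Rightarrow> real \<Rightarrow> real" where
  "h_AI Delta p qH sig aH K eta = Delta * (1 - p) * (qH K * sig K + eta * aH K)"

definition phi_AI :: "real \<Rightarrow> real \<Rightarrow> (real \<Rightarrow> real) \<Rightarrow> (real \<Rightarrow> real) \<Rightarrow> (real \<Rightarrow> real)
                     \<Rightarrow> real \<Rightarrow> real \<Rightarrow> real" where
  "phi_AI Delta p qH sig aH K eta = h_AI Delta p qH sig aH K eta / K"

definition eta_bar :: "real \<Rightarrow> real \<Rightarrow> real \<Rightarrow> (real \<Rightarrow> real) \<Rightarrow> (real \<Rightarrow> real) \<Rightarrow> real \<Rightarrow> real" where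
  "eta_bar Delta p lam phi0 aH KU =
     Sup ((\<lambda>K. max (lam - phi0 K) 0 / (Delta * (1 - p) * aH K / K)) ` {0<..KU})"

end

theory Submission
  imports Defs
begin

theorem proposition4:
  fixes Delta p lam KU :: real
    and qH sig aH :: "real \<Rightarrow> real"
  defines "phi0 \<equiv> (\<lambda>K. phi_AI Delta p qH sig aH K 0)"
  assumes Delta_pos: "Delta > 0"
    and p_range: "0 < p" "p < 1"
    and lam_range: "0 < lam" "lam < 1"
    and qH_nonneg: "\<And>K. K \<ge> 0 \<Longrightarrow> qH K \<ge> 0"
    and sig_range: "\<And>K. K \<ge> 0 \<Longrightarrow> 0 \<le> sig K \<and> sig K \<le> 1"
    and aH_range: "\<And>K. K \<ge> 0 \<Longrightarrow> 0 \<le> aH K \<and> aH K \<le> 1"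
    and phi0_cont: "continuous_on {0<..} phi0"
    and phi0_small: "\<exists>e>0. \<forall>K. 0 < K \<and> K < e \<longrightarrow> phi0 K < lam"
    and phi0_hat: "\<exists>Khat>0. phi0 Khat > lam"
    and phi0_large: "\<exists>M. \<forall>K\<ge>M. phi0 K < lam"
    and KU_pos: "KU > 0"
    and KU_root: "phi0 KU = lam"
    and KU_least: "\<And>K. 0 < K \<Longrightarrow> K < KU \<Longrightarrow> phi0 K \<noteq> lam"
    and aH_cont: "continuous_on {0<..} aH"
    and aH_pos: "\<And>K. K > 0 \<Longrightarrow> aH K > 0"
    and aH_small: "\<exists>c>0. \<exists>e>0. \<forall>K. 0 < K \<and> K < e \<longrightarrow> aH K / K \<ge> c"
  shows
    "(\<forall>eta>0. \<forall>K>0. phi_AI Delta p qH sig aH K eta > phi0 K)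
     \<and> eta_bar Delta p lam phi0 aH KU > 0
     \<and> (\<forall>eta > eta_bar Delta p lam phi0 aH KU.
           \<forall>K\<in>{0<..KU}. phi_AI Delta p qH sig aH K eta > lam)
     \<and> (eta_bar Delta p lam phi0 aH KU < 1 \<longrightarrow>
           (\<exists>eta\<in>{0..1}. \<forall>K\<in>{0<..KU}. phi_AI Delta p qH sig aH K eta > lam))
     \<and> (eta_bar Delta p lam phi0 aH KU > 1 \<longrightarrow>
           \<not> (\<forall>K\<in>{0<..KU}. phi_AI Delta p qH sig aH K 1 > lam))
     \<and> (\<forall>aH2 :: real \<Rightarrow> real. (\<forall>K\<in>{0<..KU}. aH K / K \<le> aH2 K / K) \<longrightarrow>
           eta_bar Delta p lam phi0 aH2 KU \<le> eta_bar Delta p lam phi0 aH KU)"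
proof -
  define d where "d = Delta * (1 - p)"
  have d_pos: "d > 0" using Delta_pos p_range by (simp add: d_def)
  define g where "g = (\<lambda>K. max (lam - phi0 K) 0 / (d * aH K / K))"
  have EB: "eta_bar Delta p lam phi0 aH KU = Sup (g ` {0<..KU})"
    by (simp add: eta_bar_def g_def d_def)
  have phiE: "phi_AI Delta p qH sig aH K eta = phi0 K + eta * (d * aH K / K)" for K eta
    by (cases "K = 0") (simp_all add: phi0_def phi_AI_def h_AI_def d_def field_simps)
  have phi0_nn: "phi0 K \<ge> 0" if "K > 0" for K
    using that qH_nonneg[of K] sig_range[of K] d_pos
    by (simp add: phi0_def phi_AI_def h_AI_def d_def[symmetric])
  have den_pos: "d * aH K / K > 0" if "K > 0" for K
    using that aH_pos[OF that] d_pos by simp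
  have g_nn: "g K \<ge> 0" if "K > 0" for K
    using den_pos[OF that] unfolding g_def by (intro divide_nonneg_pos) auto
  obtain c e where ce: "c > 0" "e > 0" "\<And>K. 0 < K \<Longrightarrow> K < e \<Longrightarrow> aH K / K \<ge> c"
    using aH_small by blast
  define S where "S = {min e KU..KU}"
  have Ssub: "S \<subseteq> {0<..}" using ce KU_pos by (auto simp: S_def)
  have "\<exists>x\<in>S. \<forall>y\<in>S. aH x \<le> aH y"
    apply (rule continuous_attains_inf)
    using KU_pos continuous_on_subset[OF aH_cont Ssub] by (auto simp: S_def)
  then obtain x0 where x0: "x0 \<in> S" "\<And>y. y \<in> S \<Longrightarrow> aH x0 \<le> aH y" by blast
  define m where "m = aH x0"
  have m_pos: "m > 0" using x0(1) Ssub aH_pos by (auto simp: m_def)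
  define B where "B = d * min c (m / KU)"
  have B_pos: "B > 0" using d_pos ce m_pos KU_pos by (simp add: B_def)
  have denB: "d * aH K / K \<ge> B" if "K \<in> {0<..KU}" for K
  proof -
    have "aH K / K \<ge> min c (m / KU)"
    proof (cases "K < e")
      case True then show ?thesis using ce that by force
    next
      case False
      then have "K \<in> S" using that by (auto simp: S_def)
      then have "aH K \<ge> m" using x0 by (simp add: m_def)
      moreover have "aH K / K \<ge> aH K / KU"
        using that aH_pos[of K] by (auto intro: divide_left_mono)
      moreover have "aH K / KU \<ge> m / KU" using \<open>aH K \<ge> m\<close> KU_pos
        by (simp add: divide_right_mono)
      ultimately show ?thesis by linarith
    qed
    then show ?thesis using d_pos unfolding B_def
      by (metis mult_left_mono less_imp_le times_divide_eq_right)
  qed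
  have g_le: "g K \<le> lam / B" if "K \<in> {0<..KU}" for K
  proof -
    have num: "0 \<le> max (lam - phi0 K) 0" "max (lam - phi0 K) 0 \<le> lam"
      using phi0_nn[of K] that lam_range by auto
    have "g K \<le> lam / (d * aH K / K)"
      unfolding g_def by (rule divide_right_mono) (use num den_pos[of K] that in auto)
    also have "\<dots> \<le> lam / B"
      apply (rule divide_left_mono) using denB[OF that] B_pos lam_range apply auto[2] using mult_pos_pos[OF B_pos, of "d * aH K / K"] B_pos denB[OF that] by (simp add: mult.commute)
    finally show ?thesis .
  qed
  have bdd: "bdd_above (g ` {0<..KU})" using g_le by (intro bdd_aboveI2[where M="lam / B"]) auto
  have ne: "{0<..KU} \<noteq> {}" using KU_pos by auto
  have g_le_sup: "g K \<le> Sup (g ` {0<..KU})" if "K \<in> {0<..KU}" for K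
    using bdd that by (simp add: cSUP_upper)
  obtain e2 where e2: "e2 > 0" "\<And>K. 0 < K \<Longrightarrow> K < e2 \<Longrightarrow> phi0 K < lam"
    using phi0_small by blast
  define K1 where "K1 = min e2 KU / 2"
  have K1: "K1 \<in> {0<..KU}" "K1 < e2" using e2 KU_pos by (auto simp: K1_def)
  have "g K1 > 0" unfolding g_def by (rule divide_pos_pos) (use e2(2)[of K1] K1 den_pos[of K1] in auto)
  then have P2: "Sup (g ` {0<..KU}) > 0" using g_le_sup[OF K1(1)] by linarith
  have key: "phi_AI Delta p qH sig aH K eta > lam"
    if "K \<in> {0<..KU}" "eta > g K" "eta > 0" for K eta
  proof (cases "phi0 K \<ge> lam")
    case True
    have "eta * (d * aH K / K) > 0" using that den_pos[of K] by (intro mult_pos_pos) auto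
    then show ?thesis using True unfolding phiE by linarith
  next
    case False
    have dp: "d * aH K / K > 0" using den_pos that by simp
    have "(lam - phi0 K) / (d * aH K / K) < eta" using that False by (simp add: g_def)
    then have "lam - phi0 K < eta * (d * aH K / K)" using dp by (simp only: pos_divide_less_eq[OF dp] mult.commute)
    then show ?thesis by (simp add: phiE)
  qed
  have P1: "\<forall>eta>0. \<forall>K>0. phi_AI Delta p qH sig aH K eta > phi0 K"
    unfolding phiE using den_pos by (simp add: mult_pos_pos del: times_divide_eq_right)
  have P3: "\<forall>eta > Sup (g ` {0<..KU}). \<forall>K\<in>{0<..KU}. phi_AI Delta p qH sig aH K eta > lam"
    using key g_le_sup P2 by (meson le_less_trans less_trans)
  have P4: "Sup (g ` {0<..KU}) < 1 \<longrightarrow>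
           (\<exists>eta\<in>{0..1}. \<forall>K\<in>{0<..KU}. phi_AI Delta p qH sig aH K eta > lam)"
    using P3 by (intro impI bexI[where x=1]) auto
  have P5: "Sup (g ` {0<..KU}) > 1 \<longrightarrow>
           \<not> (\<forall>K\<in>{0<..KU}. phi_AI Delta p qH sig aH K 1 > lam)"
  proof (intro impI notI)
    assume s: "Sup (g ` {0<..KU}) > 1" and all: "\<forall>K\<in>{0<..KU}. phi_AI Delta p qH sig aH K 1 > lam"
    have "g K \<le> 1" if "K \<in> {0<..KU}" for K
    proof (cases "phi0 K \<ge> lam")
      case True then show ?thesis by (simp add: g_def)
    next
      case False
      have dp: "d * aH K / K > 0" using den_pos that by simp
      have "lam < phi0 K + d * aH K / K" using all that by (simp add: phiE)
      then have "lam - phi0 K < d * aH K / K" by linarith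
      moreover have "max (lam - phi0 K) 0 = lam - phi0 K" using False by simp
      ultimately show ?thesis using dp unfolding g_def by (simp only: pos_divide_le_eq[OF dp])
    qed
    then have "Sup (g ` {0<..KU}) \<le> 1" using ne by (intro cSUP_least) auto
    then show False using s by simp
  qed
  have P6: "\<forall>aH2 :: real \<Rightarrow> real. (\<forall>K\<in>{0<..KU}. aH K / K \<le> aH2 K / K) \<longrightarrow>
           eta_bar Delta p lam phi0 aH2 KU \<le> eta_bar Delta p lam phi0 aH KU"
  proof (intro allI impI)
    fix aH2 :: "real \<Rightarrow> real"
    assume mono: "\<forall>K\<in>{0<..KU}. aH K / K \<le> aH2 K / K"
    define g2 where "g2 = (\<lambda>K. max (lam - phi0 K) 0 / (d * aH2 K / K))"
    have "eta_bar Delta p lam phi0 aH2 KU = Sup (g2 ` {0<..KU})"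
      by (simp add: eta_bar_def g2_def d_def)
    moreover have "g2 K \<le> g K" if "K \<in> {0<..KU}" for K
    proof -
      have dp: "d * aH K / K > 0" using den_pos that by simp
      have "d * (aH K / K) \<le> d * (aH2 K / K)" using mono that d_pos by (intro mult_left_mono) auto
      then have "d * aH K / K \<le> d * aH2 K / K" by simp
      have nn: "0 \<le> max (lam - phi0 K) 0" by simp
      show ?thesis unfolding g_def g2_def
        by (rule divide_left_mono[OF \<open>d * aH K / K \<le> d * aH2 K / K\<close> nn]) (rule mult_pos_pos, use dp \<open>d * aH K / K \<le> d * aH2 K / K\<close> in linarith, rule dp)
    qed
    then have "Sup (g2 ` {0<..KU}) \<le> Sup (g ` {0<..KU})"
      using ne bdd by (meson cSUP_mono)
    ultimately show "eta_bar Delta p lam phi0 aH2 KU \<le> eta_bar Delta p lam phi0 aH KU"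
      using EB by simp
  qed
  show ?thesis using P1 P2 P3 P4 P5 P6 EB by simp
qed

end
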